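(* Let $U,U_1$ be open subsets of $\mathbb{R}^n$ with $\overline{U_1}$ compact and contained in $U$. Then for every $(u_\varepsilon)_\varepsilon\in\mathcal{E}_{M,co}(U)$ there exists $(v_\varepsilon)_\varepsilon\in\mathcal{E}_{M,sm}(U_1)$ such that $(u_\varepsilon|_{U_1}-v_\varepsilon)_\varepsilon\in\mathcal{N}_{co}(U_1)$.
   Context: Let $I=(0,1]$, $\mathbb{K}\in\{\mathbb{R},\mathbb{C}\}$. For open $V\subseteq\mathbb{R}^n$, $\mathcal{E}_{M,co}(V)$ is the set of nets $(u_\varepsilon)_{\varepsilon\in I}$ of smooth functions $V\to\mathbb{K}$ such that $(\varepsilon,x)\mapsto\partial^\alpha u_\varepsilon(x)$ is continuous on $I\times V$ for all multi-indices $\alpha$, and such that for every compact $K\subseteq V$ and every $\alpha$ there is $N\in\mathbb{N}$ with $\sup_{x\in K}|\partial^\alpha u_\varepsilon(x)|=O(\varepsilon^{-N})$ as $\varepsilon\to0$. $\mathcal{N}_{co}(V)$ is the set of such continuously parametrized nets with $\sup_{x\in K}|\partial^\alpha u_\varepsilon(x)|=O(\varepsilon^{m})$ for all compact $K$, all $\alpha$, all $m\in\mathbb{N}$. $\mathcal{E}_{M,sm}(V)$ is defined like $\mathcal{E}_{M,co}(V)$ but requiring $(\varepsilon,x)\mapsto u_\varepsilon(x)$ to be smooth on $I\times V$. *)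

theory Defs
  imports "HOL-Analysis.Analysis"
begin

text \<open>Directional derivative of f along v at x, relative to the domain S
  (for open S this is the ordinary directional derivative; at boundary points
  of non-open S it is the one-sided derivative within S).\<close>
definition dderiv :: "'a::real_normed_vector set \<Rightarrow> 'a \<Rightarrow> ('a \<Rightarrow> 'k::real_normed_vector) \<Rightarrow> 'a \<Rightarrow> 'k" where
  "dderiv S v f x = vector_derivative (\<lambda>t. f (x + t *\<^sub>R v)) (at 0 within {t. x + t *\<^sub>R v \<in> S})"

text \<open>Iterated directional derivatives along a list of directions
  (a multi-index is represented by a list of basis directions).\<close>
fun pderivs :: "'a::real_normed_vector set \<Rightarrow> 'a list \<Rightarrow> ('a \<Rightarrow> 'k::real_normed_vector) \<Rightarrow> 'a \<Rightarrow> 'k" where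
  "pderivs S [] f = f"
| "pderivs S (v # vs) f = dderiv S v (pderivs S vs f)"

definition smooth_on_dom :: "'a::euclidean_space set \<Rightarrow> ('a \<Rightarrow> 'k::real_normed_vector) \<Rightarrow> bool" where
  "smooth_on_dom S f \<longleftrightarrow>
     (\<forall>vs. set vs \<subseteq> Basis \<longrightarrow>
        continuous_on S (pderivs S vs f) \<and>
        (\<forall>v\<in>Basis. \<forall>x\<in>S. (\<lambda>t. pderivs S vs f (x + t *\<^sub>R v)) differentiable (at 0 within {t. x + t *\<^sub>R v \<in> S})))"

definition Ipar :: "real set" where "Ipar = {0<..1}"

definition co_net :: "'a::euclidean_space set \<Rightarrow> (real \<Rightarrow> 'a \<Rightarrow> 'k::real_normed_vector) \<Rightarrow> bool" where
  "co_net V u \<longleftrightarrow>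
     (\<forall>\<epsilon>\<in>Ipar. smooth_on_dom V (u \<epsilon>)) \<and>
     (\<forall>\<alpha>. set \<alpha> \<subseteq> Basis \<longrightarrow>
        continuous_on (Ipar \<times> V) (\<lambda>p. pderivs V \<alpha> (u (fst p)) (snd p)))"

definition moderate :: "'a::euclidean_space set \<Rightarrow> (real \<Rightarrow> 'a \<Rightarrow> 'k::real_normed_vector) \<Rightarrow> bool" where
  "moderate V u \<longleftrightarrow>
     (\<forall>K \<alpha>. compact K \<and> K \<subseteq> V \<and> set \<alpha> \<subseteq> Basis \<longrightarrow>
        (\<exists>N::nat. \<exists>C \<eta>. 0 < \<eta> \<and> \<eta> \<le> 1 \<and>
           (\<forall>\<epsilon>\<in>{0<..\<eta>}. \<forall>x\<in>K. norm (pderivs V \<alpha> (u \<epsilon>) x) \<le> C * (1 / \<epsilon>) ^ N)))"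

definition negligible_net :: "'a::euclidean_space set \<Rightarrow> (real \<Rightarrow> 'a \<Rightarrow> 'k::real_normed_vector) \<Rightarrow> bool" where
  "negligible_net V u \<longleftrightarrow>
     (\<forall>K \<alpha> (m::nat). compact K \<and> K \<subseteq> V \<and> set \<alpha> \<subseteq> Basis \<longrightarrow>
        (\<exists>C \<eta>. 0 < \<eta> \<and> \<eta> \<le> 1 \<and>
           (\<forall>\<epsilon>\<in>{0<..\<eta>}. \<forall>x\<in>K. norm (pderivs V \<alpha> (u \<epsilon>) x) \<le> C * \<epsilon> ^ m)))"

definition EM_co :: "'a::euclidean_space set \<Rightarrow> (real \<Rightarrow> 'a \<Rightarrow> 'k::real_normed_vector) set" where
  "EM_co V = {u. co_net V u \<and> moderate V u}"

definition N_co :: "'a::euclidean_space set \<Rightarrow> (real \<Rightarrow> 'a \<Rightarrow> 'k::real_normed_vector) set" where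
  "N_co V = {u. co_net V u \<and> negligible_net V u}"

text \<open>Smooth parametrization: (eps,x) \<mapsto> u eps x smooth on I \<times> V (one-sided in eps at eps = 1).\<close>
definition EM_sm :: "'a::euclidean_space set \<Rightarrow> (real \<Rightarrow> 'a \<Rightarrow> 'k::real_normed_vector) set" where
  "EM_sm V = {u. co_net V u \<and> moderate V u \<and>
                 smooth_on_dom (Ipar \<times> V) (\<lambda>p. u (fst p) (snd p))}"

end

theory Submission
  imports Defs "HOL-Computational_Algebra.Polynomial"
begin

fun Cn :: "nat \<Rightarrow> (real \<Rightarrow> real) \<Rightarrow> bool" where
  "Cn 0 f = True"
| "Cn (Suc n) f = ((\<forall>x. f differentiable (at x)) \<and> Cn n (deriv f))"

definition smoothR :: "(real \<Rightarrow> real) \<Rightarrow> bool" where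
  "smoothR f \<longleftrightarrow> (\<forall>n. Cn n f)"

lemma Cn_mono: "Cn (Suc n) f \<Longrightarrow> Cn n f"
  by (induction n arbitrary: f) auto

lemma deriv_fun_eq:
  assumes "\<And>x. DERIV f x :> f' x" shows "deriv f = f'"
  using assms DERIV_imp_deriv by blast

lemma Cn_const: "Cn n (\<lambda>x. c)"
proof (induction n arbitrary: c)
  case (Suc n)
  have "deriv (\<lambda>x::real. c) = (\<lambda>x. 0)" by (rule deriv_fun_eq) auto
  then show ?case using Suc by auto
qed simp

lemma Cn_add: "Cn n f \<Longrightarrow> Cn n g \<Longrightarrow> Cn n (\<lambda>x. f x + g x)"
proof (induction n arbitrary: f g)
  case (Suc n)
  then have df: "\<And>x. f differentiable (at x)" and dg: "\<And>x. g differentiable (at x)" by auto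
  have "deriv (\<lambda>x. f x + g x) = (\<lambda>x. deriv f x + deriv g x)"
    by (rule deriv_fun_eq) (use df dg in \<open>auto intro!: derivative_eq_intros simp: DERIV_deriv_iff_real_differentiable[symmetric]\<close>)
  moreover have "\<forall>x. (\<lambda>x. f x + g x) differentiable (at x)" using df dg by auto
  ultimately show ?case using Suc by auto
qed simp

lemma Cn_mult: "Cn n f \<Longrightarrow> Cn n g \<Longrightarrow> Cn n (\<lambda>x. f x * g x)"
proof (induction n arbitrary: f g)
  case (Suc n)
  then have df: "\<And>x. f differentiable (at x)" and dg: "\<And>x. g differentiable (at x)" by auto
  have "deriv (\<lambda>x. f x * g x) = (\<lambda>x. deriv f x * g x + f x * deriv g x)"
    by (rule deriv_fun_eq) (use df dg in \<open>auto intro!: derivative_eq_intros simp: DERIV_deriv_iff_real_differentiable[symmetric]\<close>)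
  moreover have "\<forall>x. (\<lambda>x. f x * g x) differentiable (at x)" using df dg by auto
  moreover have "Cn n (\<lambda>x. deriv f x * g x + f x * deriv g x)"
    using Suc Cn_mono by (intro Cn_add) auto
  ultimately show ?case by auto
qed simp

lemma DERIV_affine_comp:
  fixes f :: "real \<Rightarrow> real"
  assumes "f differentiable (at (c * x + d))"
  shows "DERIV (\<lambda>t. f (c * t + d)) x :> c * deriv f (c * x + d)"
proof -
  have 1: "DERIV f (c * x + d) :> deriv f (c * x + d)" using assms DERIV_deriv_iff_real_differentiable[of f "c * x + d"] by blast
  have 2: "DERIV (\<lambda>t. c * t + d) x :> c" by (auto intro!: derivative_eq_intros)
  show ?thesis using DERIV_chain2[OF 1 2] by (simp add: mult.commute)
qed

lemma Cn_affine: "Cn n f \<Longrightarrow> Cn n (\<lambda>t. f (c * t + d))"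
proof (induction n arbitrary: f)
  case (Suc n)
  then have df: "\<And>x. f differentiable (at x)" by auto
  have "deriv (\<lambda>t. f (c * t + d)) = (\<lambda>t. c * deriv f (c * t + d))"
    by (rule deriv_fun_eq) (use df DERIV_affine_comp in blast)
  moreover have "\<forall>x. (\<lambda>t. f (c * t + d)) differentiable (at x)"
    using DERIV_affine_comp df real_differentiable_def by blast
  moreover have "Cn n (\<lambda>t. c * deriv f (c * t + d))"
    using Suc by (intro Cn_mult Cn_const) auto
  ultimately show ?case by auto
qed simp

lemma Cn_inverse: "Cn n f \<Longrightarrow> (\<forall>x. f x \<noteq> 0) \<Longrightarrow> Cn n (\<lambda>x. inverse (f x))"
proof (induction n arbitrary: f)
  case (Suc n)
  then have df: "\<And>x. f differentiable (at x)" by auto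
  have D: "DERIV (\<lambda>x. inverse (f x)) x :> - deriv f x * (inverse (f x) * inverse (f x))" for x
  proof -
    have "DERIV f x :> deriv f x" using df DERIV_deriv_iff_real_differentiable by blast
    then show ?thesis using Suc.prems(2)
      by (auto intro!: derivative_eq_intros simp: power2_eq_square)
  qed
  have "deriv (\<lambda>x. inverse (f x)) = (\<lambda>x. - deriv f x * (inverse (f x) * inverse (f x)))"
    by (rule deriv_fun_eq) (rule D)
  moreover have "\<forall>x. (\<lambda>x. inverse (f x)) differentiable (at x)"
    using D real_differentiable_def by blast
  moreover have "Cn n (\<lambda>x. - deriv f x * (inverse (f x) * inverse (f x)))"
  proof -
    have "Cn n (\<lambda>x. inverse (f x))" by (rule Suc.IH[OF Cn_mono[OF Suc.prems(1)] Suc.prems(2)])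
    have A: "Cn n (\<lambda>x. (-1) * deriv f x)" using Suc Cn_mult[OF Cn_const[of n "-1"], of "deriv f"] by auto
    have B: "Cn n (\<lambda>x. inverse (f x) * inverse (f x))" using Cn_mult[OF \<open>Cn n (\<lambda>x. inverse (f x))\<close> \<open>Cn n (\<lambda>x. inverse (f x))\<close>] .
    show ?thesis using Cn_mult[OF A B] by simp
  qed
  ultimately show ?case by auto
qed simp

definition Fp :: "real poly \<Rightarrow> real \<Rightarrow> real" where
  "Fp p t = (if t > 0 then poly p (inverse t) * exp (- inverse t) else 0)"

definition Qp :: "real poly \<Rightarrow> real poly" where
  "Qp p = [:0,0,1:] * (p - pderiv p)"

lemma poly_exp_lim:
  fixes p :: "real poly"
  shows "((\<lambda>s. poly p s * exp (-s)) \<longlongrightarrow> 0) at_top"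
proof -
  have eq: "poly p s * exp (-s) = (\<Sum>i\<le>degree p. coeff p i * (s ^ i / exp s))" for s
    by (simp add: poly_altdef exp_minus sum_distrib_right divide_inverse mult.assoc)
  have "((\<lambda>s. \<Sum>i\<le>degree p. coeff p i * (s ^ i / exp s)) \<longlongrightarrow> (\<Sum>i\<le>degree p. coeff p i * 0)) at_top"
    by (intro tendsto_intros tendsto_power_div_exp_0)
  then show ?thesis by (simp add: eq)
qed

lemma Fp_DERIV: "DERIV (Fp p) t :> Fp (Qp p) t"
proof (cases "t > 0")
  case True
  have d: "DERIV (\<lambda>t. poly p (inverse t) * exp (- inverse t)) t :> Fp (Qp p) t"
    using True
    by (auto intro!: derivative_eq_intros simp: Fp_def Qp_def algebra_simps power2_eq_square)
  show ?thesis
    by (rule has_field_derivative_transform_within_open[OF d, of "{0<..}"]) (auto simp: Fp_def True)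
next
  case False
  show ?thesis
  proof (cases "t < 0")
    case True
    have d: "DERIV (\<lambda>t. 0) t :> 0" by simp
    have "DERIV (Fp p) t :> 0"
      by (rule has_field_derivative_transform_within_open[OF d, of "{..<0}"]) (auto simp: Fp_def True)
    then show ?thesis using True by (simp add: Fp_def)
  next
    case False
    with \<open>\<not> t > 0\<close> have t0: "t = 0" by auto
    have "((\<lambda>h. (Fp p (0 + h) - Fp p 0) / h) \<longlongrightarrow> 0) (at 0)"
    proof (rule filterlim_split_at)
      show "((\<lambda>h. (Fp p (0 + h) - Fp p 0) / h) \<longlongrightarrow> 0) (at_left 0)"
      proof (rule tendsto_eq_rhs[OF Lim_transform_eventually[OF tendsto_const]])
        show "\<forall>\<^sub>F h in at_left 0. (0::real) = (Fp p (0 + h) - Fp p 0) / h"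
          using eventually_at_left_real[where a=0 and b="-1"] by (rule eventually_mono) (auto simp: Fp_def)
      qed simp
      have lim: "((\<lambda>s. poly (pCons 0 p) s * exp (-s)) \<longlongrightarrow> 0) at_top" by (rule poly_exp_lim)
      have lim2: "((\<lambda>h. poly (pCons 0 p) (inverse h) * exp (- inverse h)) \<longlongrightarrow> 0) (at_right 0)"
        by (rule filterlim_compose[OF lim filterlim_inverse_at_top_right])
      show "((\<lambda>h. (Fp p (0 + h) - Fp p 0) / h) \<longlongrightarrow> 0) (at_right 0)"
      proof (rule Lim_transform_eventually[OF lim2])
        show "\<forall>\<^sub>F h in at_right 0. poly (pCons 0 p) (inverse h) * exp (- inverse h) = (Fp p (0 + h) - Fp p 0) / h"
          using eventually_at_right_real[where a=0 and b=1] by (rule eventually_mono) (auto simp: Fp_def field_simps)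
      qed
    qed
    then have "DERIV (Fp p) 0 :> 0" by (simp add: DERIV_def)
    then show ?thesis by (simp add: t0 Fp_def)
  qed
qed

lemma Cn_Fp: "Cn n (Fp p)"
proof (induction n arbitrary: p)
  case (Suc n)
  have "deriv (Fp p) = Fp (Qp p)" by (rule deriv_fun_eq) (rule Fp_DERIV)
  moreover have "\<forall>x. Fp p differentiable (at x)" using Fp_DERIV real_differentiable_def by blast
  ultimately show ?case using Suc by simp
qed simp

definition fl :: "real \<Rightarrow> real" where "fl = Fp 1"

lemma fl_eq: "fl t = (if t > 0 then exp (- inverse t) else 0)"
  by (simp add: fl_def Fp_def)

definition hh :: "real \<Rightarrow> real" where
  "hh t = fl (t - 1/3) * inverse (fl (t - 1/3) + fl (2/3 - t))"

lemma hh_den_pos: "fl (t - 1/3) + fl (2/3 - t) > 0"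
  by (cases "t > 1/3") (auto simp: fl_eq add_pos_nonneg add_nonneg_pos)

lemma smoothR_hh: "smoothR hh"
  unfolding smoothR_def
proof
  fix n
  have a: "Cn n (\<lambda>t. fl (1 * t + (-1/3)))" unfolding fl_def by (rule Cn_affine[OF Cn_Fp])
  have b: "Cn n (\<lambda>t. fl ((-1) * t + 2/3))" unfolding fl_def by (rule Cn_affine[OF Cn_Fp])
  have c: "Cn n (\<lambda>t. inverse (fl (1 * t + (-1/3)) + fl ((-1) * t + 2/3)))"
  proof (intro Cn_inverse Cn_add a b allI)
    fix x
    show "fl (1 * x + (-1/3)) + fl ((-1) * x + 2/3) \<noteq> 0" using hh_den_pos[of x] by simp
  qed
  show "Cn n hh" using Cn_mult[OF a c] unfolding hh_def by simp
qed

lemma hh_0: "t \<le> 1/3 \<Longrightarrow> hh t = 0"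
  by (simp add: hh_def fl_eq)

lemma hh_1: "t \<ge> 2/3 \<Longrightarrow> hh t = 1"
  using hh_den_pos[of t] by (simp add: hh_def fl_eq)

lemma hh_bounds: "0 \<le> hh t" "hh t \<le> 1"
proof -
  have p: "0 \<le> fl x" for x by (simp add: fl_eq)
  show "0 \<le> hh t" using hh_den_pos[of t] p[of "t - 1/3"] by (simp add: hh_def)
  show "hh t \<le> 1" using hh_den_pos[of t] p[of "t - 1/3"] p[of "2/3 - t"]
    by (simp add: hh_def field_simps)
qed

lemma smoothR_diff: "smoothR f \<Longrightarrow> f differentiable (at x)"
  unfolding smoothR_def by (metis Cn.simps(2))

lemma smoothR_deriv: "smoothR f \<Longrightarrow> smoothR (deriv f)"
  unfolding smoothR_def by (metis Cn.simps(2))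

lemma smoothR_derivs: "smoothR f \<Longrightarrow> smoothR ((deriv ^^ j) f)"
  by (induction j) (auto intro: smoothR_deriv)

lemma smoothR_DERIV: "smoothR f \<Longrightarrow> DERIV ((deriv ^^ j) f) x :> (deriv ^^ Suc j) f x"
  using smoothR_diff[OF smoothR_derivs[of f j]] DERIV_deriv_iff_real_differentiable by auto

lemma smoothR_affine: "smoothR f \<Longrightarrow> smoothR (\<lambda>t. f (c * t + d))"
  unfolding smoothR_def using Cn_affine by blast

lemma smoothR_const: "smoothR (\<lambda>t. c)"
  unfolding smoothR_def using Cn_const by blast

lemma smoothR_one_minus: "smoothR f \<Longrightarrow> smoothR (\<lambda>t. 1 - f t)"
proof -
  assume "smoothR f"
  then have "Cn n (\<lambda>t. 1 + (-1) * f t)" for n unfolding smoothR_def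
    by (intro Cn_add Cn_mult Cn_const) auto
  then show ?thesis unfolding smoothR_def by simp
qed


lemma vd_local:
  fixes f g :: "real \<Rightarrow> 'b::real_normed_vector"
  assumes "0 \<in> T" "r > 0" "\<And>t. t \<in> T \<Longrightarrow> \<bar>t\<bar> < r \<Longrightarrow> f t = g t"
  shows vd_local_hvd: "(f has_vector_derivative D) (at 0 within T) \<longleftrightarrow> (g has_vector_derivative D) (at 0 within T)"
    and vd_local_vd: "vector_derivative f (at 0 within T) = vector_derivative g (at 0 within T)"
    and vd_local_diff: "f differentiable (at 0 within T) \<longleftrightarrow> g differentiable (at 0 within T)"
proof -
  have tr: "(f has_derivative L) (at 0 within T) \<longleftrightarrow> (g has_derivative L) (at 0 within T)" for L
  proof
    assume "(f has_derivative L) (at 0 within T)"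
    then show "(g has_derivative L) (at 0 within T)"
      by (rule has_derivative_transform_within[OF _ assms(2) assms(1)]) (use assms(3) in auto)
  next
    assume "(g has_derivative L) (at 0 within T)"
    then show "(f has_derivative L) (at 0 within T)"
      by (rule has_derivative_transform_within[OF _ assms(2) assms(1)]) (use assms(3) in \<open>auto simp: dist_real_def\<close>)
  qed
  show hvd: "(f has_vector_derivative D) (at 0 within T) \<longleftrightarrow> (g has_vector_derivative D) (at 0 within T)" for D
    unfolding has_vector_derivative_def by (rule tr)
  show "vector_derivative f (at 0 within T) = vector_derivative g (at 0 within T)"
    unfolding vector_derivative_def using hvd by simp
  show "f differentiable (at 0 within T) \<longleftrightarrow> g differentiable (at 0 within T)"
    unfolding differentiable_def using tr by simp
qed

lemma line_in_open:
  fixes q d :: "'a::real_normed_vector"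
  assumes "open W" "q \<in> W"
  obtains r where "r > 0" "\<And>t. \<bar>t\<bar> < r \<Longrightarrow> q + t *\<^sub>R d \<in> W"
proof -
  obtain \<rho> where \<rho>: "\<rho> > 0" "ball q \<rho> \<subseteq> W" using assms openE by blast
  define r where "r = \<rho> / (norm d + 1)"
  have nd: "norm d + 1 > 0" by (metis norm_ge_zero add_nonneg_pos zero_less_one)
  have r: "r > 0" using \<rho> nd by (simp add: r_def)
  have "q + t *\<^sub>R d \<in> W" if "\<bar>t\<bar> < r" for t
  proof -
    have "norm (t *\<^sub>R d) = \<bar>t\<bar> * norm d" by simp
    also have "\<dots> \<le> \<bar>t\<bar> * (norm d + 1)" by (simp add: mult_left_mono)
    also have "\<dots> < r * (norm d + 1)" using that nd by (simp add: mult_strict_right_mono)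
    also have "\<dots> = \<rho>" using nd by (simp add: r_def)
    finally have "dist (q + t *\<^sub>R d) q < \<rho>" by (simp add: dist_norm)
    then show ?thesis using \<rho> by (auto simp: dist_commute)
  qed
  then show ?thesis using r that by blast
qed

lemma open_line_set:
  fixes x d :: "'a::real_normed_vector"
  assumes "open V" shows "open {t::real. x + t *\<^sub>R d \<in> V}"
proof -
  have "continuous_on UNIV (\<lambda>t::real. x + t *\<^sub>R d)" by (intro continuous_intros)
  then have "open ((\<lambda>t::real. x + t *\<^sub>R d) -` V)" using assms by (simp add: open_vimage)
  then show ?thesis by (simp add: vimage_def)
qed

lemma pderivs_local:
  assumes "open W" "\<And>q. q \<in> S \<Longrightarrow> q \<in> W \<Longrightarrow> f q = g q"
  shows "q \<in> S \<Longrightarrow> q \<in> W \<Longrightarrow> pderivs S \<alpha> f q = pderivs S \<alpha> g q"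
proof (induction \<alpha> arbitrary: q)
  case Nil
  then show ?case using assms by simp
next
  case (Cons d \<alpha>)
  obtain r where r: "r > 0" "\<And>t. \<bar>t\<bar> < r \<Longrightarrow> q + t *\<^sub>R d \<in> W"
    using line_in_open[OF assms(1) Cons.prems(2)] by blast
  show ?case unfolding pderivs.simps dderiv_def
    by (rule vd_local_vd[OF _ r(1)]) (use Cons r in auto)
qed

lemma smooth_local:
  fixes f :: "'a::euclidean_space \<Rightarrow> 'b::real_normed_vector" and S :: "'a set"
  assumes "\<And>q. q \<in> S \<Longrightarrow> \<exists>W G. open W \<and> q \<in> W \<and> smooth_on_dom S G \<and> (\<forall>p\<in>S. p \<in> W \<longrightarrow> f p = G p)"
  shows "smooth_on_dom S f"
  unfolding smooth_on_dom_def
proof (intro allI impI conjI ballI)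
  fix vs :: "'a list" assume vs: "set vs \<subseteq> Basis"
  show "continuous_on S (pderivs S vs f)"
    unfolding continuous_on_eq_continuous_within
  proof
    fix q assume q: "q \<in> S"
    obtain W G where WG: "open W" "q \<in> W" "smooth_on_dom S G" "\<forall>p\<in>S. p \<in> W \<longrightarrow> f p = G p"
      using assms[OF q] by blast
    have eq: "p \<in> S \<Longrightarrow> p \<in> W \<Longrightarrow> pderivs S vs G p = pderivs S vs f p" for p
      using pderivs_local[OF WG(1), of S G f] WG(4) by auto
    obtain \<rho> where \<rho>: "\<rho> > 0" "ball q \<rho> \<subseteq> W" using WG openE by blast
    have "continuous (at q within S) (pderivs S vs G)"
      using WG(3) vs q unfolding smooth_on_dom_def continuous_on_eq_continuous_within by blast
    have inW: "dist x' q < \<rho> \<Longrightarrow> x' \<in> W" for x' using \<rho>(2) by (auto simp: dist_commute)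
    show "continuous (at q within S) (pderivs S vs f)"
      by (rule continuous_transform_within[OF \<open>continuous (at q within S) (pderivs S vs G)\<close> \<rho>(1) q]) (use eq inW in auto)
  qed
  fix v x :: 'a assume v: "v \<in> Basis" and x: "x \<in> S"
  obtain W G where WG: "open W" "x \<in> W" "smooth_on_dom S G" "\<forall>p\<in>S. p \<in> W \<longrightarrow> f p = G p"
    using assms[OF x] by blast
  have eq: "p \<in> S \<Longrightarrow> p \<in> W \<Longrightarrow> pderivs S vs G p = pderivs S vs f p" for p
    using pderivs_local[OF WG(1), of S G f] WG(4) by auto
  obtain r where r: "r > 0" "\<And>t. \<bar>t\<bar> < r \<Longrightarrow> x + t *\<^sub>R v \<in> W"
    using line_in_open[OF WG(1) WG(2)] by blast
  have "(\<lambda>t. pderivs S vs G (x + t *\<^sub>R v)) differentiable (at 0 within {t. x + t *\<^sub>R v \<in> S})"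
    using WG(3) vs v x unfolding smooth_on_dom_def by blast
  then show "(\<lambda>t. pderivs S vs f (x + t *\<^sub>R v)) differentiable (at 0 within {t. x + t *\<^sub>R v \<in> S})"
    by (subst vd_local_diff[OF _ r(1), where g = "\<lambda>t. pderivs S vs G (x + t *\<^sub>R v)"])
       (use x eq r in auto)
qed


lemma hvd_cscale:
  assumes "(f has_vector_derivative D) (at x within s)"
  shows "((\<lambda>t. a *\<^sub>R f t) has_vector_derivative a *\<^sub>R D) (at x within s)"
proof -
  have "((\<lambda>t. a) has_field_derivative 0) (at x within s)" by simp
  from has_vector_derivative_scaleR[OF this assms] show ?thesis by simp
qed

lemma smooth_open_at:
  fixes f :: "'a::euclidean_space \<Rightarrow> 'b::real_normed_vector"
  assumes "open V" "smooth_on_dom V f" "set vs \<subseteq> Basis" "v \<in> Basis" "x \<in> V"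
  shows "(\<lambda>t. pderivs V vs f (x + t *\<^sub>R v)) differentiable (at 0)"
proof -
  have "(\<lambda>t. pderivs V vs f (x + t *\<^sub>R v)) differentiable (at 0 within {t. x + t *\<^sub>R v \<in> V})"
    using assms unfolding smooth_on_dom_def by blast
  moreover have "at 0 within {t. x + t *\<^sub>R v \<in> V} = at (0::real)"
    using assms by (intro at_within_open open_line_set) auto
  ultimately show ?thesis by simp
qed

lemma dderiv_open:
  assumes "open V" "x \<in> V"
  shows "dderiv V v f x = vector_derivative (\<lambda>t. f (x + t *\<^sub>R v)) (at 0)"
proof -
  have "at 0 within {t. x + t *\<^sub>R v \<in> V} = at (0::real)"
    using assms by (intro at_within_open open_line_set) auto
  then show ?thesis by (simp add: dderiv_def)
qed

lemma pderivs_open_subset: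
  assumes "open V" "open V1" "V1 \<subseteq> V"
  shows "x \<in> V1 \<Longrightarrow> pderivs V \<alpha> f x = pderivs V1 \<alpha> f x"
proof (induction \<alpha> arbitrary: x)
  case (Cons d \<alpha>)
  obtain r where r: "r > 0" "\<And>t. \<bar>t\<bar> < r \<Longrightarrow> x + t *\<^sub>R d \<in> V1"
    using line_in_open[OF assms(2) Cons.prems] by blast
  have "dderiv V d (pderivs V \<alpha> f) x = vector_derivative (\<lambda>t. pderivs V \<alpha> f (x + t *\<^sub>R d)) (at 0)"
    using Cons.prems assms by (intro dderiv_open) auto
  also have "\<dots> = vector_derivative (\<lambda>t. pderivs V1 \<alpha> f (x + t *\<^sub>R d)) (at 0)"
    by (rule vd_local_vd[OF _ r(1)]) (use Cons.IH r in auto)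
  also have "\<dots> = dderiv V1 d (pderivs V1 \<alpha> f) x"
    using Cons.prems assms by (intro dderiv_open[symmetric]) auto
  finally show ?case by simp
qed simp

lemma smooth_open_subset:
  fixes f :: "'a::euclidean_space \<Rightarrow> 'b::real_normed_vector"
  assumes "open V" "open V1" "V1 \<subseteq> V" "smooth_on_dom V f"
  shows "smooth_on_dom V1 f"
  unfolding smooth_on_dom_def
proof (intro allI impI conjI ballI)
  fix vs :: "'a list" assume vs: "set vs \<subseteq> Basis"
  have "continuous_on V1 (pderivs V vs f)"
    using assms vs unfolding smooth_on_dom_def by (meson continuous_on_subset)
  then show "continuous_on V1 (pderivs V1 vs f)"
    by (rule continuous_on_eq) (use pderivs_open_subset[OF assms(1-3)] in auto)
  fix v x :: 'a assume v: "v \<in> Basis" and x: "x \<in> V1"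
  obtain r where r: "r > 0" "\<And>t. \<bar>t\<bar> < r \<Longrightarrow> x + t *\<^sub>R v \<in> V1"
    using line_in_open[OF assms(2) x] by blast
  have "(\<lambda>t. pderivs V vs f (x + t *\<^sub>R v)) differentiable (at 0)"
    using smooth_open_at[OF assms(1,4) vs v] x assms(3) by auto
  then have "(\<lambda>t. pderivs V1 vs f (x + t *\<^sub>R v)) differentiable (at 0)"
    by (subst (asm) vd_local_diff[OF _ r(1), where g = "\<lambda>t. pderivs V1 vs f (x + t *\<^sub>R v)"])
       (use r pderivs_open_subset[OF assms(1-3)] in auto)
  moreover have "at 0 within {t. x + t *\<^sub>R v \<in> V1} = at (0::real)"
    using assms x by (intro at_within_open open_line_set) auto
  ultimately show "(\<lambda>t. pderivs V1 vs f (x + t *\<^sub>R v)) differentiable (at 0 within {t. x + t *\<^sub>R v \<in> V1})"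
    by simp
qed

lemma pderivs_lin:
  fixes f g :: "'a::euclidean_space \<Rightarrow> 'b::real_normed_vector"
  assumes "open V" "smooth_on_dom V f" "smooth_on_dom V g" "set \<alpha> \<subseteq> Basis"
  shows "x \<in> V \<Longrightarrow> pderivs V \<alpha> (\<lambda>x. a *\<^sub>R f x + b *\<^sub>R g x) x = a *\<^sub>R pderivs V \<alpha> f x + b *\<^sub>R pderivs V \<alpha> g x"
  using assms(4)
proof (induction \<alpha> arbitrary: x)
  case (Cons d \<alpha>)
  have d: "d \<in> Basis" and al: "set \<alpha> \<subseteq> Basis" using Cons.prems by auto
  obtain r where r: "r > 0" "\<And>t. \<bar>t\<bar> < r \<Longrightarrow> x + t *\<^sub>R d \<in> V"
    using line_in_open[OF assms(1) Cons.prems(1)] by blast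
  have "dderiv V d (pderivs V \<alpha> (\<lambda>x. a *\<^sub>R f x + b *\<^sub>R g x)) x
        = vector_derivative (\<lambda>t. pderivs V \<alpha> (\<lambda>x. a *\<^sub>R f x + b *\<^sub>R g x) (x + t *\<^sub>R d)) (at 0)"
    using Cons.prems assms by (intro dderiv_open) auto
  also have "\<dots> = vector_derivative (\<lambda>t. a *\<^sub>R pderivs V \<alpha> f (x + t *\<^sub>R d) + b *\<^sub>R pderivs V \<alpha> g (x + t *\<^sub>R d)) (at 0)"
    by (rule vd_local_vd[OF _ r(1)]) (use Cons.IH r al in auto)
  also have "\<dots> = a *\<^sub>R vector_derivative (\<lambda>t. pderivs V \<alpha> f (x + t *\<^sub>R d)) (at 0)
                 + b *\<^sub>R vector_derivative (\<lambda>t. pderivs V \<alpha> g (x + t *\<^sub>R d)) (at 0)"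
  proof (rule vector_derivative_within)
    show "at (0::real) \<noteq> bot" by simp
    have "(\<lambda>t. pderivs V \<alpha> f (x + t *\<^sub>R d)) differentiable (at 0)"
      using smooth_open_at[OF assms(1,2) al d Cons.prems(1)] .
    then have 1: "((\<lambda>t. pderivs V \<alpha> f (x + t *\<^sub>R d)) has_vector_derivative vector_derivative (\<lambda>t. pderivs V \<alpha> f (x + t *\<^sub>R d)) (at 0)) (at 0)"
      using vector_derivative_works by blast
    have "(\<lambda>t. pderivs V \<alpha> g (x + t *\<^sub>R d)) differentiable (at 0)"
      using smooth_open_at[OF assms(1,3) al d Cons.prems(1)] .
    then have 2: "((\<lambda>t. pderivs V \<alpha> g (x + t *\<^sub>R d)) has_vector_derivative vector_derivative (\<lambda>t. pderivs V \<alpha> g (x + t *\<^sub>R d)) (at 0)) (at 0)"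
      using vector_derivative_works by blast
    show "((\<lambda>t. a *\<^sub>R pderivs V \<alpha> f (x + t *\<^sub>R d) + b *\<^sub>R pderivs V \<alpha> g (x + t *\<^sub>R d)) has_vector_derivative
      a *\<^sub>R vector_derivative (\<lambda>t. pderivs V \<alpha> f (x + t *\<^sub>R d)) (at 0) + b *\<^sub>R vector_derivative (\<lambda>t. pderivs V \<alpha> g (x + t *\<^sub>R d)) (at 0)) (at 0)"
      by (intro has_vector_derivative_add hvd_cscale[OF 1] hvd_cscale[OF 2])
  qed
  also have "\<dots> = a *\<^sub>R dderiv V d (pderivs V \<alpha> f) x + b *\<^sub>R dderiv V d (pderivs V \<alpha> g) x"
    using Cons.prems assms by (simp add: dderiv_open)
  finally show ?case by simp
qed simp

lemma smooth_lin:
  fixes f g :: "'a::euclidean_space \<Rightarrow> 'b::real_normed_vector"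
  assumes "open V" "smooth_on_dom V f" "smooth_on_dom V g"
  shows "smooth_on_dom V (\<lambda>x. a *\<^sub>R f x + b *\<^sub>R g x)"
  unfolding smooth_on_dom_def
proof (intro allI impI conjI ballI)
  fix vs :: "'a list" assume vs: "set vs \<subseteq> Basis"
  have "continuous_on V (\<lambda>x. a *\<^sub>R pderivs V vs f x + b *\<^sub>R pderivs V vs g x)"
    using assms vs unfolding smooth_on_dom_def by (intro continuous_intros) auto
  then show "continuous_on V (pderivs V vs (\<lambda>x. a *\<^sub>R f x + b *\<^sub>R g x))"
    by (rule continuous_on_eq) (use pderivs_lin[OF assms vs] in auto)
  fix v x :: 'a assume v: "v \<in> Basis" and x: "x \<in> V"
  obtain r where r: "r > 0" "\<And>t. \<bar>t\<bar> < r \<Longrightarrow> x + t *\<^sub>R v \<in> V"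
    using line_in_open[OF assms(1) x] by blast
  have "(\<lambda>t. a *\<^sub>R pderivs V vs f (x + t *\<^sub>R v) + b *\<^sub>R pderivs V vs g (x + t *\<^sub>R v)) differentiable (at 0)"
    using smooth_open_at[OF assms(1,2) vs v x] smooth_open_at[OF assms(1,3) vs v x]
    by (intro differentiable_add differentiable_scaleR differentiable_const) auto
  then have "(\<lambda>t. pderivs V vs (\<lambda>x. a *\<^sub>R f x + b *\<^sub>R g x) (x + t *\<^sub>R v)) differentiable (at 0)"
    by (subst vd_local_diff[OF _ r(1)]) (use r pderivs_lin[OF assms vs] in auto)
  moreover have "at 0 within {t. x + t *\<^sub>R v \<in> V} = at (0::real)"
    using assms x by (intro at_within_open open_line_set) auto
  ultimately show "(\<lambda>t. pderivs V vs (\<lambda>x. a *\<^sub>R f x + b *\<^sub>R g x) (x + t *\<^sub>R v)) differentiable (at 0 within {t. x + t *\<^sub>R v \<in> V})"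
    by simp
qed

lemma pderivs_fiber:
  fixes G :: "real \<times> 'a::real_normed_vector \<Rightarrow> 'b::real_normed_vector"
  assumes "e \<in> A"
  shows "x \<in> V \<Longrightarrow> pderivs (A \<times> V) (map (\<lambda>b. (0, b)) \<alpha>) G (e, x) = pderivs V \<alpha> (\<lambda>y. G (e, y)) x"
proof (induction \<alpha> arbitrary: x)
  case (Cons b \<alpha>)
  have eqset: "{t. (e, x) + t *\<^sub>R (0, b) \<in> A \<times> V} = {t. x + t *\<^sub>R b \<in> V}" using assms by auto
  have "dderiv (A \<times> V) (0, b) (pderivs (A \<times> V) (map (\<lambda>b. (0, b)) \<alpha>) G) (e, x)
     = vector_derivative (\<lambda>t. pderivs (A \<times> V) (map (\<lambda>b. (0, b)) \<alpha>) G (e, x + t *\<^sub>R b)) (at 0 within {t. x + t *\<^sub>R b \<in> V})"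
    unfolding dderiv_def eqset by simp
  also have "\<dots> = vector_derivative (\<lambda>t. pderivs V \<alpha> (\<lambda>y. G (e, y)) (x + t *\<^sub>R b)) (at 0 within {t. x + t *\<^sub>R b \<in> V})"
    by (rule vd_local_vd[OF _ zero_less_one]) (use Cons in auto)
  finally show ?case by (simp add: dderiv_def)
qed simp


definition nE :: "(real \<times> 'a::zero) list \<Rightarrow> nat" where
  "nE \<alpha> = length (filter (\<lambda>d. fst d \<noteq> 0) \<alpha>)"

definition xd :: "(real \<times> 'a) list \<Rightarrow> 'a list" where
  "xd \<alpha> = map snd (filter (\<lambda>d. fst d = 0) \<alpha>)"

definition Fml :: "'a::euclidean_space set \<Rightarrow> (real \<Rightarrow> real) \<Rightarrow> (real \<Rightarrow> real) \<Rightarrow> ('a \<Rightarrow> 'k::real_normed_vector) \<Rightarrow> ('a \<Rightarrow> 'k)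
   \<Rightarrow> (real \<times> 'a) list \<Rightarrow> real \<times> 'a \<Rightarrow> 'k" where
  "Fml V a b w1 w2 \<alpha> q = (deriv ^^ nE \<alpha>) a (fst q) *\<^sub>R pderivs V (xd \<alpha>) w1 (snd q)
                        + (deriv ^^ nE \<alpha>) b (fst q) *\<^sub>R pderivs V (xd \<alpha>) w2 (snd q)"

lemma Basis_prod_cases:
  assumes "(d :: real \<times> 'a::euclidean_space) \<in> Basis"
  shows "d = (1, 0) \<or> (\<exists>b\<in>Basis. d = (0, b))"
  using assms by (auto simp: Basis_prod_def)

lemma nontriv_dir:
  fixes V :: "'a::euclidean_space set"
  assumes "open V" "q \<in> Ipar \<times> V" "d \<in> Basis"
  shows "at 0 within {t. q + t *\<^sub>R d \<in> Ipar \<times> V} \<noteq> bot"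
proof -
  obtain e x where q: "q = (e, x)" "e \<in> Ipar" "x \<in> V" using assms(2) by auto
  from Basis_prod_cases[OF assms(3)] show ?thesis
  proof
    assume d: "d = (1, 0)"
    have e: "0 < e" "e \<le> 1" using q(2) unfolding Ipar_def by auto
    have sub: "{-e<..<0} \<subseteq> {t. q + t *\<^sub>R d \<in> Ipar \<times> V}"
    proof
      fix t assume "t \<in> {-e<..<(0::real)}"
      then have "0 < e + t" "e + t \<le> 1" using e by auto
      then show "t \<in> {t. q + t *\<^sub>R d \<in> Ipar \<times> V}" using q(3) by (simp add: q(1) d Ipar_def)
    qed
    have "(0::real) islimpt {-e<..<0}" using e by (intro islimpt_greaterThanLessThan2) simp
    then have "0 islimpt {t. q + t *\<^sub>R d \<in> Ipar \<times> V}" using sub by (rule islimpt_subset)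
    then show ?thesis by (simp add: trivial_limit_within)
  next
    assume "\<exists>b\<in>Basis. d = (0, b)"
    then obtain b where d: "d = (0, b)" by blast
    have "{t. q + t *\<^sub>R d \<in> Ipar \<times> V} = {t. x + t *\<^sub>R b \<in> V}" using q by (auto simp: d)
    moreover have "at 0 within {t. x + t *\<^sub>R b \<in> V} = at (0::real)"
      using assms q by (intro at_within_open open_line_set) auto
    ultimately show ?thesis by simp
  qed
qed

lemma shift_DERIV:
  assumes "smoothR f"
  shows "((\<lambda>t. (deriv ^^ j) f (e + t)) has_field_derivative (deriv ^^ Suc j) f e) (at 0)"
proof -
  have 1: "DERIV ((deriv ^^ j) f) (e + 0) :> (deriv ^^ Suc j) f (e + 0)" by (rule smoothR_DERIV[OF assms])
  have 2: "((\<lambda>t. e + t) has_field_derivative 1) (at (0::real))" by (auto intro!: derivative_eq_intros)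
  from DERIV_chain2[OF 1 2] show ?thesis by simp
qed

lemma Fml_line:
  fixes V :: "'a::euclidean_space set" and w1 w2 :: "'a \<Rightarrow> 'k::real_normed_vector"
  assumes "open V" "smoothR a" "smoothR b" "smooth_on_dom V w1" "smooth_on_dom V w2"
    and "set \<alpha> \<subseteq> Basis" "q \<in> Ipar \<times> V" "d \<in> Basis"
  shows "((\<lambda>t. Fml V a b w1 w2 \<alpha> (q + t *\<^sub>R d)) has_vector_derivative Fml V a b w1 w2 (d # \<alpha>) q) (at 0)"
proof -
  obtain e x where q: "q = (e, x)" "e \<in> Ipar" "x \<in> V" using assms(7) by auto
  define j where "j = nE \<alpha>"
  define \<beta> where "\<beta> = xd \<alpha>"
  have xb: "set \<beta> \<subseteq> Basis" using assms(6) by (auto simp: \<beta>_def xd_def Basis_prod_def)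
  from Basis_prod_cases[OF assms(8)] show ?thesis
  proof
    assume d: "d = (1, 0)"
    have nd: "nE (d # \<alpha>) = Suc j" "xd (d # \<alpha>) = \<beta>" by (simp_all add: d nE_def j_def xd_def \<beta>_def)
    have line: "Fml V a b w1 w2 \<alpha> (q + t *\<^sub>R d) =
       (deriv ^^ j) a (e + t) *\<^sub>R pderivs V \<beta> w1 x + (deriv ^^ j) b (e + t) *\<^sub>R pderivs V \<beta> w2 x" for t
      by (simp add: Fml_def q d j_def \<beta>_def)
    have Da: "((\<lambda>t. (deriv ^^ j) a (e + t)) has_field_derivative (deriv ^^ Suc j) a e) (at 0)"
      by (rule shift_DERIV[OF assms(2)])
    have Db: "((\<lambda>t. (deriv ^^ j) b (e + t)) has_field_derivative (deriv ^^ Suc j) b e) (at 0)"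
      by (rule shift_DERIV[OF assms(3)])
    have "((\<lambda>t. (deriv ^^ j) a (e + t) *\<^sub>R pderivs V \<beta> w1 x + (deriv ^^ j) b (e + t) *\<^sub>R pderivs V \<beta> w2 x)
        has_vector_derivative ((deriv ^^ j) a (e + 0) *\<^sub>R 0 + (deriv ^^ Suc j) a e *\<^sub>R pderivs V \<beta> w1 x)
          + ((deriv ^^ j) b (e + 0) *\<^sub>R 0 + (deriv ^^ Suc j) b e *\<^sub>R pderivs V \<beta> w2 x)) (at 0)"
      by (intro has_vector_derivative_add has_vector_derivative_scaleR[OF Da] has_vector_derivative_scaleR[OF Db]
          has_vector_derivative_const)
    then show ?thesis unfolding line by (simp add: Fml_def nd q)
  next
    assume "\<exists>b'\<in>Basis. d = (0, b')"
    then obtain b' where d: "d = (0, b')" and b': "b' \<in> Basis" by blast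
    have nd: "nE (d # \<alpha>) = j" "xd (d # \<alpha>) = b' # \<beta>" by (simp_all add: d nE_def j_def xd_def \<beta>_def)
    have line: "Fml V a b w1 w2 \<alpha> (q + t *\<^sub>R d) =
       (deriv ^^ j) a e *\<^sub>R pderivs V \<beta> w1 (x + t *\<^sub>R b') + (deriv ^^ j) b e *\<^sub>R pderivs V \<beta> w2 (x + t *\<^sub>R b')" for t
      by (simp add: Fml_def q d j_def \<beta>_def)
    have 1: "((\<lambda>t. pderivs V \<beta> w1 (x + t *\<^sub>R b')) has_vector_derivative dderiv V b' (pderivs V \<beta> w1) x) (at 0)"
      unfolding dderiv_open[OF assms(1) q(3)] using smooth_open_at[OF assms(1,4) xb b' q(3)] by (simp add: vector_derivative_works[symmetric])
    have 2: "((\<lambda>t. pderivs V \<beta> w2 (x + t *\<^sub>R b')) has_vector_derivative dderiv V b' (pderivs V \<beta> w2) x) (at 0)"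
      unfolding dderiv_open[OF assms(1) q(3)] using smooth_open_at[OF assms(1,5) xb b' q(3)] by (simp add: vector_derivative_works[symmetric])
    have F: "Fml V a b w1 w2 (d # \<alpha>) q = (deriv ^^ j) a e *\<^sub>R dderiv V b' (pderivs V \<beta> w1) x + (deriv ^^ j) b e *\<^sub>R dderiv V b' (pderivs V \<beta> w2) x"
      by (simp add: Fml_def nd q)
    show ?thesis unfolding line F
      by (rule has_vector_derivative_add[OF hvd_cscale[OF 1] hvd_cscale[OF 2]])
  qed
qed

lemma prod_formula:
  fixes V :: "'a::euclidean_space set" and w1 w2 :: "'a \<Rightarrow> 'k::real_normed_vector"
  assumes "open V" "smoothR a" "smoothR b" "smooth_on_dom V w1" "smooth_on_dom V w2"
  shows "set \<alpha> \<subseteq> Basis \<Longrightarrow> q \<in> Ipar \<times> V \<Longrightarrow>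
    pderivs (Ipar \<times> V) \<alpha> (\<lambda>q. a (fst q) *\<^sub>R w1 (snd q) + b (fst q) *\<^sub>R w2 (snd q)) q = Fml V a b w1 w2 \<alpha> q"
proof (induction \<alpha> arbitrary: q)
  case Nil
  then show ?case by (simp add: Fml_def nE_def xd_def)
next
  case (Cons d \<alpha>)
  have d: "d \<in> Basis" and al: "set \<alpha> \<subseteq> Basis" using Cons.prems by auto
  have "pderivs (Ipar \<times> V) (d # \<alpha>) (\<lambda>q. a (fst q) *\<^sub>R w1 (snd q) + b (fst q) *\<^sub>R w2 (snd q)) q
      = vector_derivative (\<lambda>t. Fml V a b w1 w2 \<alpha> (q + t *\<^sub>R d)) (at 0 within {t. q + t *\<^sub>R d \<in> Ipar \<times> V})"
    unfolding pderivs.simps dderiv_def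
    by (rule vd_local_vd[OF _ zero_less_one]) (use Cons al in auto)
  also have "\<dots> = Fml V a b w1 w2 (d # \<alpha>) q"
    by (rule vector_derivative_within[OF nontriv_dir[OF assms(1) Cons.prems(2) d]])
       (rule has_vector_derivative_at_within[OF Fml_line[OF assms al Cons.prems(2) d]])
  finally show ?case .
qed

lemma continuous_derivs: "smoothR f \<Longrightarrow> continuous_on A ((deriv ^^ j) f)"
  by (meson DERIV_isCont continuous_at_imp_continuous_on smoothR_DERIV)

lemma Fml_cont:
  fixes V :: "'a::euclidean_space set" and w1 w2 :: "'a \<Rightarrow> 'k::real_normed_vector"
  assumes "smoothR a" "smoothR b" "smooth_on_dom V w1" "smooth_on_dom V w2" "set \<alpha> \<subseteq> Basis"
  shows "continuous_on (Ipar \<times> V) (Fml V a b w1 w2 \<alpha>)"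
proof -
  have xb: "set (xd \<alpha>) \<subseteq> Basis" using assms(5) by (auto simp: xd_def Basis_prod_def)
  have c1: "continuous_on V (pderivs V (xd \<alpha>) w1)" "continuous_on V (pderivs V (xd \<alpha>) w2)"
    using assms xb unfolding smooth_on_dom_def by auto
  have s: "snd ` (Ipar \<times> V) \<subseteq> V" by auto
  have c2: "continuous_on (Ipar \<times> V) (\<lambda>q. pderivs V (xd \<alpha>) w1 (snd q))"
    by (rule continuous_on_compose2[OF c1(1) continuous_on_snd[OF continuous_on_id] s])
  have c2': "continuous_on (Ipar \<times> V) (\<lambda>q. pderivs V (xd \<alpha>) w2 (snd q))"
    by (rule continuous_on_compose2[OF c1(2) continuous_on_snd[OF continuous_on_id] s])
  have c3: "continuous_on (Ipar \<times> V) (\<lambda>q. (deriv ^^ nE \<alpha>) a (fst q))"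
    by (rule continuous_on_compose2[OF continuous_derivs[where A=UNIV, OF assms(1)] continuous_on_fst[OF continuous_on_id]]) simp
  have c3': "continuous_on (Ipar \<times> V) (\<lambda>q. (deriv ^^ nE \<alpha>) b (fst q))"
    by (rule continuous_on_compose2[OF continuous_derivs[where A=UNIV, OF assms(2)] continuous_on_fst[OF continuous_on_id]]) simp
  show ?thesis unfolding Fml_def[abs_def] by (intro continuous_on_add continuous_on_scaleR c2 c3 c2' c3')
qed

lemma smooth_prod:
  fixes V :: "'a::euclidean_space set" and w1 w2 :: "'a \<Rightarrow> 'k::real_normed_vector"
  assumes "open V" "smoothR a" "smoothR b" "smooth_on_dom V w1" "smooth_on_dom V w2"
  shows "smooth_on_dom (Ipar \<times> V) (\<lambda>q. a (fst q) *\<^sub>R w1 (snd q) + b (fst q) *\<^sub>R w2 (snd q))"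
  unfolding smooth_on_dom_def
proof (intro allI impI conjI ballI)
  fix vs :: "(real \<times> 'a) list" assume vs: "set vs \<subseteq> Basis"
  show "continuous_on (Ipar \<times> V) (pderivs (Ipar \<times> V) vs (\<lambda>q. a (fst q) *\<^sub>R w1 (snd q) + b (fst q) *\<^sub>R w2 (snd q)))"
    by (rule continuous_on_eq[OF Fml_cont[OF assms(2-5) vs]]) (use prod_formula[OF assms vs] in auto)
  fix v q :: "real \<times> 'a" assume v: "v \<in> Basis" and q: "q \<in> Ipar \<times> V"
  have "((\<lambda>t. Fml V a b w1 w2 vs (q + t *\<^sub>R v)) has_vector_derivative Fml V a b w1 w2 (v # vs) q) (at 0 within {t. q + t *\<^sub>R v \<in> Ipar \<times> V})"
    by (rule has_vector_derivative_at_within[OF Fml_line[OF assms vs q v]])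
  then have "(\<lambda>t. Fml V a b w1 w2 vs (q + t *\<^sub>R v)) differentiable (at 0 within {t. q + t *\<^sub>R v \<in> Ipar \<times> V})"
    by (rule differentiableI_vector)
  then show "(\<lambda>t. pderivs (Ipar \<times> V) vs (\<lambda>q. a (fst q) *\<^sub>R w1 (snd q) + b (fst q) *\<^sub>R w2 (snd q)) (q + t *\<^sub>R v))
          differentiable (at 0 within {t. q + t *\<^sub>R v \<in> Ipar \<times> V})"
    by (subst vd_local_diff[OF _ zero_less_one]) (use prod_formula[OF assms vs] q in auto)
qed


definition band :: "real \<Rightarrow> nat" where "band a = (LEAST k. (1/2::real) ^ Suc k < a)"

lemma half_pow_ex: "0 < (a::real) \<Longrightarrow> \<exists>k. (1/2::real) ^ Suc k < a"
proof -
  assume a: "0 < a"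
  obtain n where "(1/2::real) ^ n < a" using real_arch_pow_inv[OF a, of "1/2"] by auto
  moreover have "(1/2::real) ^ Suc n \<le> (1/2) ^ n" by (simp add: power_decreasing)
  ultimately show ?thesis by (meson le_less_trans)
qed

lemma band: "0 < a \<Longrightarrow> (1/2::real) ^ Suc (band a) < a"
  unfolding band_def by (rule LeastI_ex[OF half_pow_ex])

lemma band_le: "(1/2::real) ^ Suc k < a \<Longrightarrow> band a \<le> k"
  unfolding band_def by (rule Least_le)

fun nodes :: "(nat \<Rightarrow> real) \<Rightarrow> nat \<Rightarrow> real" where
  "nodes D 0 = 1"
| "nodes D (Suc n) = nodes D n - D (band (nodes D n))"

definition goodD :: "(nat \<Rightarrow> real) \<Rightarrow> bool" where
  "goodD D \<longleftrightarrow> (\<forall>k. 0 < D k \<and> D k \<le> (1/2) ^ (k + 2))"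

lemma nodes_basic:
  assumes "goodD D"
  shows "0 < nodes D n \<and> nodes D n \<le> 1"
proof (induction n)
  case (Suc n)
  define a where "a = nodes D n"
  define k where "k = band a"
  have a: "0 < a" "a \<le> 1" using Suc by (auto simp: a_def)
  have b: "(1/2::real) ^ Suc k < a" using band[OF a(1)] by (simp add: k_def)
  have d: "0 < D k" "D k \<le> (1/2) ^ (k + 2)" using assms by (auto simp: goodD_def)
  have "(1/2::real) ^ (k + 2) = (1/2) ^ Suc k / 2" by simp
  then have "nodes D (Suc n) > (1/2) ^ (k + 2)" using b d by (simp add: a_def[symmetric] k_def[symmetric])
  moreover have "(0::real) < (1/2) ^ (k + 2)" by simp
  ultimately show ?case using a d by (simp add: a_def[symmetric] k_def[symmetric])
qed simp

lemma nodes_lower: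
  assumes "goodD D"
  shows "nodes D (Suc n) > (1/2) ^ (band (nodes D n) + 2)"
proof -
  define a where "a = nodes D n"
  define k where "k = band a"
  have a: "0 < a" "a \<le> 1" using nodes_basic[OF assms, of n] by (auto simp: a_def)
  have b: "(1/2::real) ^ Suc k < a" using band[OF a(1)] by (simp add: k_def)
  have d: "0 < D k" "D k \<le> (1/2) ^ (k + 2)" using assms by (auto simp: goodD_def)
  have "(1/2::real) ^ (k + 2) = (1/2) ^ Suc k / 2" by simp
  then show ?thesis using b d by (simp add: a_def[symmetric] k_def[symmetric])
qed

lemma nodes_dec:
  assumes "goodD D" shows "nodes D (Suc n) < nodes D n"
  using assms by (simp add: goodD_def)

lemma nodes_antimono:
  assumes "goodD D" "n \<le> m" shows "nodes D m \<le> nodes D n"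
  using assms(2)
proof (induction m rule: dec_induct)
  case (step m)
  then show ?case using nodes_dec[OF assms(1), of m] by linarith
qed simp

lemma nodes_strict:
  assumes "goodD D" "n < m" shows "nodes D m < nodes D n"
  using nodes_antimono[OF assms(1), of "Suc n" m] nodes_dec[OF assms(1), of n] assms(2) by simp

lemma nodes_tend:
  assumes "goodD D" "c > 0"
  shows "\<exists>n. nodes D n < c"
proof (rule ccontr)
  assume "\<not> (\<exists>n. nodes D n < c)"
  then have ge: "\<And>n. c \<le> nodes D n" by (simp add: not_less)
  obtain k0 where k0: "(1/2::real) ^ Suc k0 < c" using half_pow_ex[OF assms(2)] by blast
  have bl: "band (nodes D n) \<le> k0" for n using ge[of n] k0 by (intro band_le) simp
  define \<mu> where "\<mu> = Min (D ` {..k0})"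
  have \<mu>: "\<mu> > 0" unfolding \<mu>_def using assms(1) by (subst Min_gr_iff) (auto simp: goodD_def)
  have \<mu>le: "\<mu> \<le> D (band (nodes D n))" for n unfolding \<mu>_def using bl[of n] by (intro Min_le) auto
  have "nodes D n \<le> 1 - real n * \<mu>" for n
  proof (induction n)
    case (Suc n)
    then show ?case using \<mu>le[of n] by (simp add: algebra_simps)
  qed simp
  moreover obtain n where "real n * \<mu> > 1"
    using \<mu> by (metis ex_less_of_nat_mult mult.commute)
  ultimately have "nodes D n < 0" by (smt (verit))
  then show False using nodes_basic[OF assms(1), of n] by simp
qed

lemma idx_ex1:
  assumes "goodD D" "0 < e" "e \<le> 1"
  shows "\<exists>!n. nodes D (Suc n) < e \<and> e \<le> nodes D n"
proof -
  have ex: "\<exists>m. nodes D m < e" using nodes_tend[OF assms(1,2)] .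
  define m where "m = (LEAST m. nodes D m < e)"
  have m: "nodes D m < e" unfolding m_def by (rule LeastI_ex[OF ex])
  have "m \<noteq> 0"
  proof
    assume "m = 0" then show False using m assms(3) by simp
  qed
  then obtain n where n: "m = Suc n" by (cases m) auto
  have "\<not> nodes D n < e" using not_less_Least[of n "\<lambda>m. nodes D m < e"] n by (simp add: m_def)
  then have exn: "nodes D (Suc n) < e \<and> e \<le> nodes D n" using m n by simp
  show ?thesis
  proof (rule ex1I[of _ n])
    show "nodes D (Suc n) < e \<and> e \<le> nodes D n" by (rule exn)
    fix n' assume n': "nodes D (Suc n') < e \<and> e \<le> nodes D n'"
    show "n' = n"
    proof (rule ccontr)
      assume "n' \<noteq> n"
      then consider "n' < n" | "n < n'" by linarith
      then show False
      proof cases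
        case 1
        then have "nodes D n \<le> nodes D (Suc n')" using nodes_antimono[OF assms(1), of "Suc n'" n] by linarith
        then show False using n' exn by simp
      next
        case 2
        then have "nodes D n' \<le> nodes D (Suc n)" using nodes_antimono[OF assms(1), of "Suc n" n'] by linarith
        then show False using n' exn by simp
      qed
    qed
  qed
qed

definition idx :: "(nat \<Rightarrow> real) \<Rightarrow> real \<Rightarrow> nat" where
  "idx D e = (THE n. nodes D (Suc n) < e \<and> e \<le> nodes D n)"

lemma idx:
  assumes "goodD D" "0 < e" "e \<le> 1"
  shows "nodes D (Suc (idx D e)) < e" "e \<le> nodes D (idx D e)"
  using theI'[OF idx_ex1[OF assms]] unfolding idx_def by auto

lemma idx_eq:
  assumes "goodD D" "nodes D (Suc n) < e" "e \<le> nodes D n"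
  shows "idx D e = n"
proof -
  have e: "0 < e" "e \<le> 1" using assms nodes_basic[OF assms(1), of n] nodes_basic[OF assms(1), of "Suc n"] by auto
  show ?thesis unfolding idx_def using idx_ex1[OF assms(1) e] assms(2,3) by (intro the1_equality) auto
qed

lemma idx_band:
  assumes "goodD D" "0 < e" "e \<le> (1/2) ^ Suc M"
  shows "M \<le> band (nodes D (idx D e))"
proof -
  have e1: "e \<le> 1" using assms(3) by (smt (verit) one_le_numeral power_le_one zero_le_divide_1_iff zero_le_numeral divide_le_eq_1)
  define k where "k = band (nodes D (idx D e))"
  have "(1/2::real) ^ (k + 2) < e" using nodes_lower[OF assms(1), of "idx D e"] idx(1)[OF assms(1,2) e1]
    by (simp add: k_def)
  then have "(1/2::real) ^ (k + 2) < (1/2) ^ Suc M" using assms(3) by linarith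
  moreover have "((1/2::real) ^ (k + 2) < (1/2) ^ Suc M) = (Suc M < k + 2)"
    by (rule power_strict_decreasing_iff) auto
  ultimately have "Suc M < k + 2" by blast
  then show ?thesis by (simp add: k_def)
qed


definition cf :: "(nat \<Rightarrow> real) \<Rightarrow> nat \<Rightarrow> real \<Rightarrow> real" where
  "cf D n e = hh ((e - nodes D (Suc n)) / (nodes D n - nodes D (Suc n)))"

definition vf :: "(nat \<Rightarrow> real) \<Rightarrow> (real \<Rightarrow> 'a \<Rightarrow> 'k::real_normed_vector) \<Rightarrow> real \<Rightarrow> 'a \<Rightarrow> 'k" where
  "vf D u e x = cf D (idx D e) e *\<^sub>R u (nodes D (idx D e)) x + (1 - cf D (idx D e) e) *\<^sub>R u (nodes D (Suc (idx D e))) x"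

lemma smoothR_cf:
  assumes "goodD D" shows "smoothR (cf D n)"
proof -
  define L where "L = nodes D n - nodes D (Suc n)"
  define c where "c = nodes D (Suc n)"
  have L: "L > 0" using nodes_dec[OF assms, of n] by (simp add: L_def)
  have "cf D n = (\<lambda>t. hh ((1 / L) * t + (- c / L)))"
    by (rule ext) (simp add: cf_def L_def c_def diff_divide_distrib del: nodes.simps)
  then show ?thesis using smoothR_affine[OF smoothR_hh, of "1 / L" "- c / L"] by metis
qed

lemma smoothR_one_minus_cf: "goodD D \<Longrightarrow> smoothR (\<lambda>t. 1 - cf D n t)"
  by (rule smoothR_one_minus[OF smoothR_cf])

lemma cf_bounds: "0 \<le> cf D n e" "cf D n e \<le> 1"
  unfolding cf_def by (rule hh_bounds)+

lemma nodes_Ipar: "goodD D \<Longrightarrow> nodes D n \<in> Ipar"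
  using nodes_basic by (auto simp: Ipar_def)

lemma u_smooth_U1:
  assumes "open U" "open U1" "U1 \<subseteq> U" "co_net U u" "e \<in> Ipar"
  shows "smooth_on_dom U1 (u e)"
  using assms smooth_open_subset unfolding co_net_def by blast

lemma vf_fun:
  "vf D u e = (\<lambda>x. cf D (idx D e) e *\<^sub>R u (nodes D (idx D e)) x + (1 - cf D (idx D e) e) *\<^sub>R u (nodes D (Suc (idx D e))) x)"
  by (rule ext) (simp add: vf_def)

lemma vf_local:
  fixes u :: "real \<Rightarrow> 'a::euclidean_space \<Rightarrow> 'k::real_normed_vector"
  assumes "open U" "open U1" "U1 \<subseteq> U" "co_net U u" "goodD D" "q \<in> Ipar \<times> U1"
  shows "\<exists>W G. open W \<and> q \<in> W \<and> smooth_on_dom (Ipar \<times> U1) G \<and>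
            (\<forall>p\<in>Ipar \<times> U1. p \<in> W \<longrightarrow> vf D u (fst p) (snd p) = G p)"
proof -
  obtain e x where q: "q = (e, x)" "e \<in> Ipar" "x \<in> U1" using assms(6) by auto
  have e: "0 < e" "e \<le> 1" using q by (auto simp: Ipar_def)
  define n where "n = idx D e"
  have n: "nodes D (Suc n) < e" "e \<le> nodes D n" using idx[OF assms(5) e] by (auto simp: n_def)
  have sm: "smooth_on_dom U1 (u (nodes D k))" for k using u_smooth_U1[OF assms(1-4) nodes_Ipar[OF assms(5)]] .
  show ?thesis
  proof (cases "e < nodes D n \<or> n = 0")
    case True
    define top where "top = (if n = 0 then 2 else nodes D n)"
    define W where "W = {nodes D (Suc n)<..<top} \<times> (UNIV :: 'a set)"
    define G where "G = (\<lambda>p. cf D n (fst p) *\<^sub>R u (nodes D n) (snd p) + (1 - cf D n (fst p)) *\<^sub>R u (nodes D (Suc n)) (snd p))"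
    have "open W" unfolding W_def by (intro open_Times) auto
    moreover have "q \<in> W" using True n e unfolding W_def top_def q by auto
    moreover have "smooth_on_dom (Ipar \<times> U1) G" unfolding G_def
      by (rule smooth_prod[OF assms(2) smoothR_cf[OF assms(5)] smoothR_one_minus_cf[OF assms(5)] sm sm])
    moreover have "\<forall>p\<in>Ipar \<times> U1. p \<in> W \<longrightarrow> vf D u (fst p) (snd p) = G p"
    proof (intro ballI impI)
      fix p assume p: "p \<in> Ipar \<times> U1" "p \<in> W"
      have "nodes D (Suc n) < fst p" "fst p \<le> nodes D n"
        using p True nodes_basic[OF assms(5), of 0] by (auto simp: W_def top_def Ipar_def split: if_splits)
      then have "idx D (fst p) = n" by (rule idx_eq[OF assms(5)])
      then show "vf D u (fst p) (snd p) = G p" by (simp add: vf_def G_def)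
    qed
    ultimately show ?thesis by blast
  next
    case False
    then have en: "e = nodes D n" and n0: "n \<noteq> 0" using n by auto
    then obtain m where m: "n = Suc m" by (cases n) auto
    define L where "L = nodes D n - nodes D (Suc n)"
    define L' where "L' = nodes D m - nodes D n"
    have L: "L > 0" "L' > 0" using nodes_dec[OF assms(5), of n] nodes_dec[OF assms(5), of m]
      by (auto simp: L_def L'_def m)
    define r where "r = min (L / 3) (L' / 3)"
    have r: "r > 0" "r \<le> L / 3" "r \<le> L' / 3" using L by (auto simp: r_def)
    define W where "W = {nodes D n - r<..<nodes D n + r} \<times> (UNIV :: 'a set)"
    define G where "G = (\<lambda>p. (\<lambda>_::real. 1::real) (fst p) *\<^sub>R u (nodes D n) (snd p) + (\<lambda>_::real. 0::real) (fst p) *\<^sub>R u (nodes D n) (snd p))"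
    have "open W" unfolding W_def by (intro open_Times) auto
    moreover have "q \<in> W" using r unfolding W_def q en by auto
    moreover have "smooth_on_dom (Ipar \<times> U1) G" unfolding G_def
      by (rule smooth_prod[OF assms(2) smoothR_const smoothR_const sm sm])
    moreover have "\<forall>p\<in>Ipar \<times> U1. p \<in> W \<longrightarrow> vf D u (fst p) (snd p) = G p"
    proof (intro ballI impI)
      fix p assume p: "p \<in> Ipar \<times> U1" "p \<in> W"
      define e' where "e' = fst p"
      have e': "nodes D n - r < e'" "e' < nodes D n + r" using p by (auto simp: W_def e'_def)
      show "vf D u (fst p) (snd p) = G p"
      proof (cases "e' \<le> nodes D n")
        case True
        have lo: "nodes D (Suc n) < e'" using e' r(2) L by (simp add: L_def)
        have i: "idx D e' = n" by (rule idx_eq[OF assms(5) lo True])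
        have "2/3 \<le> (e' - nodes D (Suc n)) / L"
          using e' r L by (simp add: pos_le_divide_eq L_def)
        then have "cf D n e' = 1" unfolding cf_def L_def by (rule hh_1)
        then show ?thesis by (simp add: vf_def G_def i e'_def[symmetric])
      next
        case False
        have up: "e' \<le> nodes D m" using e' r(3) by (simp add: L'_def)
        have lo: "nodes D (Suc m) < e'" using False m by simp
        have i: "idx D e' = m" by (rule idx_eq[OF assms(5) lo up])
        have "(e' - nodes D (Suc m)) / L' \<le> 1/3"
          using e' r L by (simp add: pos_divide_le_eq L'_def m)
        then have "cf D m e' = 0" unfolding cf_def L'_def m by (rule hh_0)
        then show ?thesis by (simp add: vf_def G_def i e'_def[symmetric] m)
      qed
    qed
    ultimately show ?thesis by blast
  qed
qed

lemma vf_smooth_prod: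
  fixes u :: "real \<Rightarrow> 'a::euclidean_space \<Rightarrow> 'k::real_normed_vector"
  assumes "open U" "open U1" "U1 \<subseteq> U" "co_net U u" "goodD D"
  shows "smooth_on_dom (Ipar \<times> U1) (\<lambda>p. vf D u (fst p) (snd p))"
  by (rule smooth_local) (use vf_local[OF assms] in auto)

lemma vf_smooth:
  fixes u :: "real \<Rightarrow> 'a::euclidean_space \<Rightarrow> 'k::real_normed_vector"
  assumes "open U" "open U1" "U1 \<subseteq> U" "co_net U u" "goodD D"
  shows "smooth_on_dom U1 (vf D u e)"
  unfolding vf_fun
  by (rule smooth_lin[OF assms(2) u_smooth_U1[OF assms(1-4) nodes_Ipar[OF assms(5)]]
        u_smooth_U1[OF assms(1-4) nodes_Ipar[OF assms(5)]]])

lemma vf_co_net: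
  fixes u :: "real \<Rightarrow> 'a::euclidean_space \<Rightarrow> 'k::real_normed_vector"
  assumes "open U" "open U1" "U1 \<subseteq> U" "co_net U u" "goodD D"
  shows "co_net U1 (vf D u)"
  unfolding co_net_def
proof (intro conjI allI impI ballI)
  fix e assume "e \<in> Ipar" then show "smooth_on_dom U1 (vf D u e)" using vf_smooth[OF assms] by blast
next
  fix \<alpha> :: "'a list" assume al: "set \<alpha> \<subseteq> Basis"
  have b: "set (map (\<lambda>b. (0::real, b)) \<alpha>) \<subseteq> Basis" using al by (auto simp: Basis_prod_def)
  have "continuous_on (Ipar \<times> U1) (pderivs (Ipar \<times> U1) (map (\<lambda>b. (0::real, b)) \<alpha>) (\<lambda>p. vf D u (fst p) (snd p)))"
    using vf_smooth_prod[OF assms] b unfolding smooth_on_dom_def by blast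
  then show "continuous_on (Ipar \<times> U1) (\<lambda>p. pderivs U1 \<alpha> (vf D u (fst p)) (snd p))"
  proof (rule continuous_on_eq)
    fix p assume "p \<in> Ipar \<times> U1"
    then obtain e x where p: "p = (e, x)" "e \<in> Ipar" "x \<in> U1" by auto
    show "pderivs (Ipar \<times> U1) (map (\<lambda>b. (0, b)) \<alpha>) (\<lambda>p. vf D u (fst p) (snd p)) p = pderivs U1 \<alpha> (vf D u (fst p)) (snd p)"
      using pderivs_fiber[OF p(2) p(3), of \<alpha> "\<lambda>p. vf D u (fst p) (snd p)"] by (simp add: p)
  qed
qed


lemma finite_ex_min:
  assumes "finite A" "\<forall>a\<in>A. \<exists>d>0. Q a d" "\<And>a d d'. Q a d \<Longrightarrow> 0 < d' \<Longrightarrow> d' \<le> d \<Longrightarrow> Q a d'"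
  shows "\<exists>d>0. \<forall>a\<in>A. Q a (d::real)"
  using assms(1,2)
proof (induction A rule: finite_induct)
  case empty
  show ?case by (rule exI[of _ 1]) simp
next
  case (insert a A)
  obtain d1 where d1: "d1 > 0" "\<forall>a\<in>A. Q a d1" using insert by auto
  obtain d2 where d2: "d2 > 0" "Q a d2" using insert.prems by auto
  have "\<forall>a'\<in>insert a A. Q a' (min d1 d2)"
    using d1 d2 assms(3)[of _ d1 "min d1 d2"] assms(3)[of a d2 "min d1 d2"] by auto
  then show ?case using d1 d2 by (intro exI[of _ "min d1 d2"]) auto
qed

definition lo :: "nat \<Rightarrow> real" where "lo k = (1/2) ^ (k + 2)"

definition Dprop :: "'a::euclidean_space set \<Rightarrow> 'a set \<Rightarrow> (real \<Rightarrow> 'a \<Rightarrow> 'k::real_normed_vector) \<Rightarrow> nat \<Rightarrow> real \<Rightarrow> bool" where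
  "Dprop U U1 u k d \<longleftrightarrow> 0 < d \<and> d \<le> lo k \<and>
     (\<forall>\<alpha>. set \<alpha> \<subseteq> Basis \<and> length \<alpha> \<le> k \<longrightarrow>
        (\<forall>e\<in>{lo k..1}. \<forall>e'\<in>{lo k..1}. \<forall>x\<in>closure U1. \<bar>e - e'\<bar> \<le> d \<longrightarrow>
           norm (pderivs U \<alpha> (u e) x - pderivs U \<alpha> (u e') x) \<le> lo k ^ k))"

lemma Dprop_ex:
  fixes u :: "real \<Rightarrow> 'a::euclidean_space \<Rightarrow> 'k::real_normed_vector"
  assumes "compact (closure U1)" "closure U1 \<subseteq> U" "co_net U u"
  shows "\<exists>d. Dprop U U1 u k d"
proof -
  define A where "A = {\<alpha> :: 'a list. set \<alpha> \<subseteq> Basis \<and> length \<alpha> \<le> k}"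
  have fA: "finite A" unfolding A_def by (rule finite_lists_length_le[OF finite_Basis])
  define Q where "Q = (\<lambda>\<alpha> d. \<forall>e\<in>{lo k..1}. \<forall>e'\<in>{lo k..1}. \<forall>x\<in>closure U1. \<bar>e - e'\<bar> \<le> d \<longrightarrow>
           norm (pderivs U \<alpha> (u e) x - pderivs U \<alpha> (u e') x) \<le> lo k ^ k)"
  have lo: "0 < lo k" by (simp add: lo_def)
  have tol: "0 < lo k ^ k" using lo by simp
  have "\<forall>\<alpha>\<in>A. \<exists>d>0. Q \<alpha> d"
  proof
    fix \<alpha> assume "\<alpha> \<in> A"
    then have al: "set \<alpha> \<subseteq> Basis" by (simp add: A_def)
    define C where "C = {lo k..1} \<times> closure U1"
    have CI: "C \<subseteq> Ipar \<times> U" using lo assms(2) by (auto simp: C_def Ipar_def)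
    have "continuous_on (Ipar \<times> U) (\<lambda>p. pderivs U \<alpha> (u (fst p)) (snd p))"
      using assms(3) al unfolding co_net_def by blast
    then have "continuous_on C (\<lambda>p. pderivs U \<alpha> (u (fst p)) (snd p))" using CI by (rule continuous_on_subset)
    moreover have "compact C" unfolding C_def using assms(1) by (intro compact_Times) auto
    ultimately have "uniformly_continuous_on C (\<lambda>p. pderivs U \<alpha> (u (fst p)) (snd p))"
      by (rule compact_uniformly_continuous)
    then obtain \<delta> where \<delta>: "\<delta> > 0" "\<forall>p\<in>C. \<forall>p'\<in>C. dist p' p < \<delta> \<longrightarrow>
        dist (pderivs U \<alpha> (u (fst p')) (snd p')) (pderivs U \<alpha> (u (fst p)) (snd p)) < lo k ^ k"
      unfolding uniformly_continuous_on_def using tol by blast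
    have "Q \<alpha> (\<delta> / 2)" unfolding Q_def
    proof (intro ballI impI)
      fix e e' x assume e: "e \<in> {lo k..1}" "e' \<in> {lo k..1}" "x \<in> closure U1" "\<bar>e - e'\<bar> \<le> \<delta> / 2"
      have "(e, x) \<in> C" "(e', x) \<in> C" using e by (auto simp: C_def)
      moreover have "dist (e, x) (e', x) < \<delta>" using e \<delta> by (simp add: dist_Pair_Pair dist_real_def)
      ultimately have "dist (pderivs U \<alpha> (u e) x) (pderivs U \<alpha> (u e') x) < lo k ^ k"
        using \<delta>(2) by fastforce
      then show "norm (pderivs U \<alpha> (u e) x - pderivs U \<alpha> (u e') x) \<le> lo k ^ k"
        by (simp add: dist_norm)
    qed
    then show "\<exists>d>0. Q \<alpha> d" using \<delta> by (intro exI[of _ "\<delta> / 2"]) auto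
  qed
  moreover have "Q \<alpha> d \<Longrightarrow> 0 < d' \<Longrightarrow> d' \<le> d \<Longrightarrow> Q \<alpha> d'" for \<alpha> d d'
    unfolding Q_def by force
  ultimately obtain d0 where d0: "d0 > 0" "\<forall>\<alpha>\<in>A. Q \<alpha> d0" using finite_ex_min[OF fA] by blast
  have "Dprop U U1 u k (min d0 (lo k))"
    unfolding Dprop_def
  proof (intro conjI allI impI)
    show "0 < min d0 (lo k)" using d0 lo by simp
    show "min d0 (lo k) \<le> lo k" by simp
    fix \<alpha> :: "'a list" assume "set \<alpha> \<subseteq> Basis \<and> length \<alpha> \<le> k"
    then have "Q \<alpha> d0" using d0 by (simp add: A_def)
    then show "\<forall>e\<in>{lo k..1}. \<forall>e'\<in>{lo k..1}. \<forall>x\<in>closure U1. \<bar>e - e'\<bar> \<le> min d0 (lo k) \<longrightarrow>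
           norm (pderivs U \<alpha> (u e) x - pderivs U \<alpha> (u e') x) \<le> lo k ^ k"
      unfolding Q_def by force
  qed
  then show ?thesis by blast
qed

lemma D_ex:
  fixes u :: "real \<Rightarrow> 'a::euclidean_space \<Rightarrow> 'k::real_normed_vector"
  assumes "compact (closure U1)" "closure U1 \<subseteq> U" "co_net U u"
  obtains D where "\<forall>k. Dprop U U1 u k (D k)" "goodD D"
proof -
  have "\<forall>k. \<exists>d. Dprop U U1 u k d" using Dprop_ex[OF assms] by blast
  then obtain D where D: "\<forall>k. Dprop U U1 u k (D k)" by metis
  then have "goodD D" unfolding goodD_def Dprop_def lo_def by auto
  with D that show ?thesis by blast
qed


lemma pd_diff_eq:
  fixes u :: "real \<Rightarrow> 'a::euclidean_space \<Rightarrow> 'k::real_normed_vector"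
  assumes "open U" "open U1" "U1 \<subseteq> U" "co_net U u" "goodD D" "e \<in> Ipar" "x \<in> U1" "set \<alpha> \<subseteq> Basis"
  shows "pderivs U1 \<alpha> (\<lambda>x. u e x - vf D u e x) x = pderivs U1 \<alpha> (u e) x - pderivs U1 \<alpha> (vf D u e) x"
proof -
  have "(\<lambda>x. u e x - vf D u e x) = (\<lambda>x. 1 *\<^sub>R u e x + (-1) *\<^sub>R vf D u e x)" by simp
  then show ?thesis
    using pderivs_lin[OF assms(2) u_smooth_U1[OF assms(1-4,6)] vf_smooth[OF assms(1-5)] assms(8) assms(7), of 1 "-1"]
    by simp
qed

lemma pd_vf_eq:
  fixes u :: "real \<Rightarrow> 'a::euclidean_space \<Rightarrow> 'k::real_normed_vector"
  assumes "open U" "open U1" "U1 \<subseteq> U" "co_net U u" "goodD D" "x \<in> U1" "set \<alpha> \<subseteq> Basis"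
  shows "pderivs U1 \<alpha> (vf D u e) x = cf D (idx D e) e *\<^sub>R pderivs U \<alpha> (u (nodes D (idx D e))) x
           + (1 - cf D (idx D e) e) *\<^sub>R pderivs U \<alpha> (u (nodes D (Suc (idx D e)))) x"
  unfolding vf_fun
  using pderivs_lin[OF assms(2) u_smooth_U1[OF assms(1-4) nodes_Ipar[OF assms(5)]]
        u_smooth_U1[OF assms(1-4) nodes_Ipar[OF assms(5)]] assms(7) assms(6)]
  by (simp add: pderivs_open_subset[OF assms(1-3) assms(6)] del: nodes.simps)

lemma diff_bound:
  fixes u :: "real \<Rightarrow> 'a::euclidean_space \<Rightarrow> 'k::real_normed_vector"
  assumes "open U" "open U1" "closure U1 \<subseteq> U" "co_net U u" "\<forall>k. Dprop U U1 u k (D k)" "goodD D"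
    and "e \<in> Ipar" "x \<in> U1" "set \<alpha> \<subseteq> Basis" "length \<alpha> \<le> band (nodes D (idx D e))"
  shows "norm (pderivs U1 \<alpha> (\<lambda>x. u e x - vf D u e x) x) \<le> e ^ band (nodes D (idx D e))"
proof -
  have U1U: "U1 \<subseteq> U" using assms(3) closure_subset by blast
  have e: "0 < e" "e \<le> 1" using assms(7) by (auto simp: Ipar_def)
  define n where "n = idx D e"
  define k where "k = band (nodes D n)"
  define c where "c = cf D n e"
  define P0 where "P0 = pderivs U \<alpha> (u e) x"
  define P1 where "P1 = pderivs U \<alpha> (u (nodes D n)) x"
  define P2 where "P2 = pderivs U \<alpha> (u (nodes D (Suc n))) x"
  have pd: "pderivs U1 \<alpha> (\<lambda>x. u e x - vf D u e x) x = P0 - (c *\<^sub>R P1 + (1 - c) *\<^sub>R P2)"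
    unfolding pd_diff_eq[OF assms(1,2) U1U assms(4,6,7,8,9)] pd_vf_eq[OF assms(1,2) U1U assms(4,6,8,9)]
    by (simp add: P0_def P1_def P2_def c_def n_def pderivs_open_subset[OF assms(1,2) U1U assms(8)] del: nodes.simps)
  have n: "nodes D (Suc n) < e" "e \<le> nodes D n" using idx[OF assms(6) e] by (auto simp: n_def)
  have lk: "lo k < nodes D (Suc n)" using nodes_lower[OF assms(6), of n] by (simp add: lo_def k_def)
  have n1: "nodes D n \<le> 1" using nodes_basic[OF assms(6)] by auto
  have step: "nodes D n - nodes D (Suc n) = D k" by (simp add: k_def)
  have DP: "Dprop U U1 u k (D k)" using assms(5) by blast
  have al: "set \<alpha> \<subseteq> Basis \<and> length \<alpha> \<le> k" using assms(9,10) by (simp add: k_def n_def)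
  have xK: "x \<in> closure U1" using assms(8) closure_subset by blast
  have b1: "norm (P0 - P1) \<le> lo k ^ k"
    using DP al xK n lk n1 step unfolding Dprop_def P0_def P1_def
    by (auto elim!: allE[of _ \<alpha>] ballE[of _ _ e] ballE[of _ _ "nodes D n"] ballE[of _ _ x])
  have b2: "norm (P0 - P2) \<le> lo k ^ k"
    using DP al xK n lk n1 step unfolding Dprop_def P0_def P2_def
    by (auto elim!: allE[of _ \<alpha>] ballE[of _ _ e] ballE[of _ _ "nodes D (Suc n)"] ballE[of _ _ x])
  have c: "0 \<le> c" "c \<le> 1" using cf_bounds by (auto simp: c_def)
  have "P0 - (c *\<^sub>R P1 + (1 - c) *\<^sub>R P2) = c *\<^sub>R (P0 - P1) + (1 - c) *\<^sub>R (P0 - P2)"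
    by (simp add: algebra_simps)
  then have "norm (P0 - (c *\<^sub>R P1 + (1 - c) *\<^sub>R P2)) \<le> c * norm (P0 - P1) + (1 - c) * norm (P0 - P2)"
    using c by (metis (no_types, lifting) abs_of_nonneg diff_ge_0_iff_ge norm_scaleR norm_triangle_ineq)
  also have "\<dots> \<le> c * lo k ^ k + (1 - c) * lo k ^ k"
    using c b1 b2 by (intro add_mono mult_left_mono) auto
  also have "\<dots> = lo k ^ k" by (simp add: algebra_simps)
  also have "\<dots> \<le> e ^ k" using lk n by (intro power_mono) (auto simp: lo_def)
  finally show ?thesis by (simp add: pd k_def n_def)
qed

lemma negl:
  fixes u :: "real \<Rightarrow> 'a::euclidean_space \<Rightarrow> 'k::real_normed_vector"
  assumes "open U" "open U1" "closure U1 \<subseteq> U" "co_net U u" "\<forall>k. Dprop U U1 u k (D k)" "goodD D"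
  shows "negligible_net U1 (\<lambda>e x. u e x - vf D u e x)"
  unfolding negligible_net_def
proof (intro allI impI)
  fix K :: "'a set" and \<alpha> :: "'a list" and m :: nat
  assume K: "compact K \<and> K \<subseteq> U1 \<and> set \<alpha> \<subseteq> Basis"
  define M where "M = max m (length \<alpha>)"
  define \<eta> where "\<eta> = (1/2::real) ^ Suc M"
  have \<eta>1: "(1/2::real) ^ Suc M \<le> 1" by (rule power_le_one) auto
  have \<eta>: "0 < \<eta>" "\<eta> \<le> 1" using \<eta>1 by (auto simp: \<eta>_def)
  have "\<forall>e\<in>{0<..\<eta>}. \<forall>x\<in>K. norm (pderivs U1 \<alpha> (\<lambda>x. u e x - vf D u e x) x) \<le> 1 * e ^ m"
  proof (intro ballI)
    fix e x assume e: "e \<in> {0<..\<eta>}" and x: "x \<in> K"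
    have e1: "e \<in> Ipar" using e \<eta> by (auto simp: Ipar_def)
    have Mb: "M \<le> band (nodes D (idx D e))" using e by (intro idx_band[OF assms(6)]) (auto simp: \<eta>_def)
    have "norm (pderivs U1 \<alpha> (\<lambda>x. u e x - vf D u e x) x) \<le> e ^ band (nodes D (idx D e))"
      using Mb K x by (intro diff_bound[OF assms e1]) (auto simp: M_def)
    also have "\<dots> \<le> e ^ m" using e1 Mb by (intro power_decreasing) (auto simp: Ipar_def M_def)
    finally show "norm (pderivs U1 \<alpha> (\<lambda>x. u e x - vf D u e x) x) \<le> 1 * e ^ m" by simp
  qed
  then show "\<exists>C \<eta>. 0 < \<eta> \<and> \<eta> \<le> 1 \<and> (\<forall>e\<in>{0<..\<eta>}. \<forall>x\<in>K. norm (pderivs U1 \<alpha> ((\<lambda>e x. u e x - vf D u e x) e) x) \<le> C * e ^ m)"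
    using \<eta> by blast
qed

lemma co_net_diff:
  fixes u :: "real \<Rightarrow> 'a::euclidean_space \<Rightarrow> 'k::real_normed_vector"
  assumes "open U" "open U1" "U1 \<subseteq> U" "co_net U u" "goodD D"
  shows "co_net U1 (\<lambda>e x. u e x - vf D u e x)"
  unfolding co_net_def
proof (intro conjI allI impI ballI)
  fix e assume e: "e \<in> Ipar"
  have "(\<lambda>x. u e x - vf D u e x) = (\<lambda>x. 1 *\<^sub>R u e x + (-1) *\<^sub>R vf D u e x)" by simp
  then show "smooth_on_dom U1 (\<lambda>x. u e x - vf D u e x)"
    using smooth_lin[OF assms(2) u_smooth_U1[OF assms(1-4) e] vf_smooth[OF assms(1-5)], of 1 "-1"] by simp
next
  fix \<alpha> :: "'a list" assume al: "set \<alpha> \<subseteq> Basis"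
  have c1: "continuous_on (Ipar \<times> U1) (\<lambda>p. pderivs U \<alpha> (u (fst p)) (snd p))"
    using assms(3,4) al unfolding co_net_def by (meson continuous_on_subset order_refl Sigma_mono)
  have c2: "continuous_on (Ipar \<times> U1) (\<lambda>p. pderivs U1 \<alpha> (vf D u (fst p)) (snd p))"
    using vf_co_net[OF assms] al unfolding co_net_def by blast
  have "continuous_on (Ipar \<times> U1) (\<lambda>p. pderivs U \<alpha> (u (fst p)) (snd p) - pderivs U1 \<alpha> (vf D u (fst p)) (snd p))"
    using c1 c2 by (rule continuous_on_diff)
  then show "continuous_on (Ipar \<times> U1) (\<lambda>p. pderivs U1 \<alpha> (\<lambda>x. u (fst p) x - vf D u (fst p) x) (snd p))"
  proof (rule continuous_on_eq)
    fix p assume "p \<in> Ipar \<times> U1"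
    then show "pderivs U \<alpha> (u (fst p)) (snd p) - pderivs U1 \<alpha> (vf D u (fst p)) (snd p) =
               pderivs U1 \<alpha> (\<lambda>x. u (fst p) x - vf D u (fst p) x) (snd p)"
      using pd_diff_eq[OF assms, of "fst p" "snd p" \<alpha>] al pderivs_open_subset[OF assms(1,2,3), of "snd p" \<alpha> "u (fst p)"]
      by auto
  qed
qed

lemma moder:
  fixes u :: "real \<Rightarrow> 'a::euclidean_space \<Rightarrow> 'k::real_normed_vector"
  assumes "open U" "open U1" "closure U1 \<subseteq> U" "co_net U u" "moderate U u" "\<forall>k. Dprop U U1 u k (D k)" "goodD D"
  shows "moderate U1 (vf D u)"
  unfolding moderate_def
proof (intro allI impI)
  have U1U: "U1 \<subseteq> U" using assms(3) closure_subset by blast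
  fix K :: "'a set" and \<alpha> :: "'a list"
  assume K: "compact K \<and> K \<subseteq> U1 \<and> set \<alpha> \<subseteq> Basis"
  obtain N C \<eta> where N: "0 < \<eta>" "\<eta> \<le> 1" "\<forall>e\<in>{0<..\<eta>}. \<forall>x\<in>K. norm (pderivs U \<alpha> (u e) x) \<le> C * (1 / e) ^ N"
  proof -
    have "compact K \<and> K \<subseteq> U \<and> set \<alpha> \<subseteq> Basis" using K U1U by auto
    from assms(5)[unfolded moderate_def, rule_format, OF this] show ?thesis using that by blast
  qed
  obtain C' \<eta>' where N': "0 < \<eta>'" "\<eta>' \<le> 1" "\<forall>e\<in>{0<..\<eta>'}. \<forall>x\<in>K. norm (pderivs U1 \<alpha> (\<lambda>x. u e x - vf D u e x) x) \<le> C' * e ^ 0"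
  proof -
    have "compact K \<and> K \<subseteq> U1 \<and> set \<alpha> \<subseteq> Basis" using K by auto
    from negl[OF assms(1-4,6,7), unfolded negligible_net_def, rule_format, of K \<alpha> 0, OF this]
    show ?thesis using that by blast
  qed
  have "\<forall>e\<in>{0<..min \<eta> \<eta>'}. \<forall>x\<in>K. norm (pderivs U1 \<alpha> (vf D u e) x) \<le> (\<bar>C\<bar> + \<bar>C'\<bar>) * (1 / e) ^ N"
  proof (intro ballI)
    fix e x assume e: "e \<in> {0<..min \<eta> \<eta>'}" and x: "x \<in> K"
    have e1: "e \<in> Ipar" using e N by (auto simp: Ipar_def)
    have xU1: "x \<in> U1" using x K by auto
    have eq: "pderivs U1 \<alpha> (vf D u e) x = pderivs U \<alpha> (u e) x - pderivs U1 \<alpha> (\<lambda>x. u e x - vf D u e x) x"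
      using pd_diff_eq[OF assms(1,2) U1U assms(4,7) e1 xU1] K pderivs_open_subset[OF assms(1,2) U1U xU1]
      by simp
    have b1: "norm (pderivs U \<alpha> (u e) x) \<le> C * (1 / e) ^ N" using N e x by auto
    have b2: "norm (pderivs U1 \<alpha> (\<lambda>x. u e x - vf D u e x) x) \<le> C'" using N' e x by auto
    have p1: "1 \<le> (1 / e) ^ N" using e1 by (intro one_le_power) (auto simp: Ipar_def)
    have "norm (pderivs U1 \<alpha> (vf D u e) x) \<le> norm (pderivs U \<alpha> (u e) x) + norm (pderivs U1 \<alpha> (\<lambda>x. u e x - vf D u e x) x)"
      unfolding eq by (rule norm_triangle_ineq4)
    also have "\<dots> \<le> \<bar>C\<bar> * (1 / e) ^ N + \<bar>C'\<bar> * (1 / e) ^ N"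
    proof (rule add_mono)
      show "norm (pderivs U \<alpha> (u e) x) \<le> \<bar>C\<bar> * (1 / e) ^ N"
      proof -
        have "C * (1 / e) ^ N \<le> \<bar>C\<bar> * (1 / e) ^ N" using p1 by (intro mult_right_mono) auto
        then show ?thesis using b1 by linarith
      qed
      show "norm (pderivs U1 \<alpha> (\<lambda>x. u e x - vf D u e x) x) \<le> \<bar>C'\<bar> * (1 / e) ^ N"
      proof -
        have "\<bar>C'\<bar> * 1 \<le> \<bar>C'\<bar> * (1 / e) ^ N" using p1 by (intro mult_left_mono) auto
        then show ?thesis using b2 by linarith
      qed
    qed
    also have "\<dots> = (\<bar>C\<bar> + \<bar>C'\<bar>) * (1 / e) ^ N" by (simp add: algebra_simps)
    finally show "norm (pderivs U1 \<alpha> (vf D u e) x) \<le> (\<bar>C\<bar> + \<bar>C'\<bar>) * (1 / e) ^ N" .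
  qed
  then show "\<exists>N C \<eta>. 0 < \<eta> \<and> \<eta> \<le> 1 \<and> (\<forall>e\<in>{0<..\<eta>}. \<forall>x\<in>K. norm (pderivs U1 \<alpha> (vf D u e) x) \<le> C * (1 / e) ^ N)"
    using N N' by (intro exI[of _ N] exI[of _ "\<bar>C\<bar> + \<bar>C'\<bar>"] exI[of _ "min \<eta> \<eta>'"]) auto
qed

theorem lemma3p8:
  fixes U U1 :: "'a::euclidean_space set"
    and u :: "real \<Rightarrow> 'a \<Rightarrow> 'k::{real_normed_field, banach}"
  assumes "open U" and "open U1" and "compact (closure U1)" and "closure U1 \<subseteq> U"
    and "u \<in> EM_co U"
  shows "\<exists>v. v \<in> EM_sm U1 \<and> (\<lambda>\<epsilon> x. u \<epsilon> x - v \<epsilon> x) \<in> N_co U1"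
proof -
  have cu: "co_net U u" and mu: "moderate U u" using assms(5) by (auto simp: EM_co_def)
  have U1U: "U1 \<subseteq> U" using assms(4) closure_subset by blast
  obtain D where D: "\<forall>k. Dprop U U1 u k (D k)" "goodD D" using D_ex[OF assms(3,4) cu] by blast
  have "vf D u \<in> EM_sm U1"
    unfolding EM_sm_def using vf_co_net[OF assms(1,2) U1U cu D(2)] moder[OF assms(1,2,4) cu mu D]
      vf_smooth_prod[OF assms(1,2) U1U cu D(2)] by blast
  moreover have "(\<lambda>\<epsilon> x. u \<epsilon> x - vf D u \<epsilon> x) \<in> N_co U1"
    unfolding N_co_def using co_net_diff[OF assms(1,2) U1U cu D(2)] negl[OF assms(1,2,4) cu D] by blast
  ultimately show ?thesis by blast
qed


end
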